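(* (a) Let $(A\oplus A^*;A,A^* )$ be a Manin triple of pre-Lie-Yamaguti algebras whose bilinear form is $\omega(x+\alpha,y+\beta)=\langle\alpha,y\rangle-\langle\beta,x\rangle$ ($x,y\in A$, $\alpha,\beta\in A^*$). Then $(A\oplus A^*,[\cdot,\cdot]_C,[\![\cdot,\cdot,\cdot]\!]_C;\omega)$, where $[\cdot,\cdot]_C,[\![\cdot,\cdot,\cdot]\!]_C$ are the brackets of the subadjacent Lie-Yamaguti algebra of the pre-Lie-Yamaguti algebra $A\oplus A^*$, is a symplectic Lie-Yamaguti algebra which is a phase space of the subadjacent Lie-Yamaguti algebra of $(A,*|_A,\{\cdot,\cdot,\cdot\}|_A)$. (b) Conversely, if $(\mathfrak h\oplus\mathfrak h^*,[\cdot,\cdot],[\![\cdot,\cdot,\cdot]\!];\omega_p)$ is a perfect phase space of a Lie-Yamaguti algebra $(\mathfrak h,[\cdot,\cdot]_{\mathfrak h},[\![\cdot,\cdot,\cdot]\!]_{\mathfrak h})$, then $(\mathfrak h\oplus\mathfrak h^*;\mathfrak h,\mathfrak h^* )$, with the pre-Lie-Yamaguti structure on $\mathfrak h\oplus\mathfrak h^*$ defined by $\omega_p(X*Y,Z)=-\omega_p(Y,[X,Z])$ and $\omega_p(\{X,Y,Z\},W)=\omega_p(X,[\![W,Z,Y]\!])$ and with form $\omega_p$, is a Manin triple of pre-Lie-Yamaguti algebras. Thus there is a one-to-one correspondence between Manin triples of pre-Lie-Yamaguti algebras and perfect phase spaces of Lie-Yamaguti algebras.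
   Context: All vector spaces are over a field of characteristic $0$ and finite-dimensional. A Lie-Yamaguti algebra is a vector space $\mathfrak g$ with a bilinear skew-symmetric $[\cdot,\cdot]$ and a trilinear $[\![\cdot,\cdot,\cdot]\!]$ skew-symmetric in its first two arguments such that for all $x,y,z,w,t$: (1) $[[x,y],z]+[[y,z],x]+[[z,x],y]+[\![x,y,z]\!]+[\![y,z,x]\!]+[\![z,x,y]\!]=0$; (2) $[\![[x,y],z,w]\!]+[\![[y,z],x,w]\!]+[\![[z,x],y,w]\!]=0$; (3) $[\![x,y,[z,w]]\!]=[[\![x,y,z]\!],w]+[z,[\![x,y,w]\!]]$; (4) $[\![x,y,[\![z,w,t]\!]]\!]=[\![[\![x,y,z]\!],w,t]\!]+[\![z,[\![x,y,w]\!],t]\!]+[\![z,w,[\![x,y,t]\!]]\!]$. A symplectic structure is a nondegenerate skew-symmetric bilinear form $\omega$ with $\omega(x,[y,z])+\omega(y,[z,x])+\omega(z,[x,y])=0$ and $\omega(z,[\![x,y,w]\!])-\omega(x,[\![w,z,y]\!])+\omega(y,[\![w,z,x]\!])-\omega(w,[\![x,y,z]\!])=0$. On $\mathfrak h\oplus\mathfrak h^*$, $\omega_p(x+\alpha,y+\beta)=\langle\alpha,y\rangle-\langle\beta,x\rangle$. A phase space of $\mathfrak h$ is a Lie-Yamaguti algebra structure on $\mathfrak h\oplus\mathfrak h^*$ for which $\omega_p$ is symplectic and $\mathfrak h$ (with its original brackets) and $\mathfrak h^*$ are Lie-Yamaguti subalgebras; it is perfect if for all $x,y\in\mathfrak h$,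 $\alpha,\beta\in\mathfrak h^*$: $[\![\alpha,\beta,x]\!]\in\mathfrak h$, $[\![x,\alpha,\beta]\!]\in\mathfrak h$, $[\![x,y,\alpha]\!]\in\mathfrak h^*$, $[\![\alpha,x,y]\!]\in\mathfrak h^*$. A pre-Lie-Yamaguti algebra is a vector space $A$ with a bilinear operation $*$ and a trilinear operation $\{\cdot,\cdot,\cdot\}$ such that, writing $[x,y]_C=x*y-y*x$, $(x,y,z)=(x*y)*z-x*(y*z)$ and $\{x,y,z\}_D=\{z,y,x\}-\{z,x,y\}+(y,x,z)-(x,y,z)$, for all $x,y,z,w,t\in A$: (P1) $\{z,[x,y]_C,w\}-\{y*z,x,w\}+\{x*z,y,w\}=0$; (P2) $\{x,y,[z,w]_C\}=z*\{x,y,w\}-w*\{x,y,z\}$; (P3) $\{\{x,y,z\},w,t\}-\{\{x,y,w\},z,t\}-\{x,y,\{z,w,t\}_D\}-\{x,y,\{z,w,t\}\}+\{x,y,\{w,z,t\}\}+\{z,w,\{x,y,t\}\}_D=0$; (P4) $\{z,\{x,y,w\}_D,t\}+\{z,\{x,y,w\},t\}-\{z,\{y,x,w\},t\}+\{z,w,\{x,y,t\}_D\}+\{z,w,\{x,y,t\}\}-\{z,w,\{y,x,t\}\}=\{x,y,\{z,w,t\}\}_D-\{\{x,y,z\}_D,w,t\}$; (P5) $\{x,y,z\}_D*w+\{x,y,z\}*w-\{y,x,z\}*w=\{x,y,z*w\}_D-z*\{x,y,w\}_D$. Its subadjacent Lie-Yamaguti algebra has brackets $[x,y]_C$ and $[\![x,y,z]\!]_C=\{x,y,z\}_D+\{x,y,z\}-\{y,x,z\}$.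 A quadratic pre-Lie-Yamaguti algebra is a pre-Lie-Yamaguti algebra with a nondegenerate skew-symmetric bilinear form $\omega$ such that $\omega(x*y,z)=-\omega(y,[x,z]_C)$ and $\omega(\{x,y,z\},w)=\omega(x,[\![w,z,y]\!]_C)$. A Manin triple of pre-Lie-Yamaguti algebras is a triple $(\mathscr A;A,A')$ where $(\mathscr A,*,\{\cdot,\cdot,\cdot\};\omega)$ is a quadratic pre-Lie-Yamaguti algebra, $\mathscr A=A\oplus A'$ as vector spaces with $A,A'$ subalgebras (closed under $*$ and $\{\cdot,\cdot,\cdot\}$), both $A$ and $A'$ isotropic for $\omega$, and for all $x,y\in A$, $\alpha,\beta\in A'$: $\{\alpha,\beta,x\},\{x,\alpha,\beta\},\{\alpha,x,\beta\}\in A$ and $\{x,y,\alpha\},\{\alpha,x,y\},\{x,\alpha,y\}\in A'$. Via $\langle\alpha,x\rangle:=\omega(\alpha,x)$, $A'$ is identified with $A^*$ and then $\omega$ takes the displayed form $\omega_p$. *)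

theory Defs
  imports "HOL-Analysis.Analysis"
begin

section \<open>Multilinearity (generic: additive group 'v with a scalar action of the field 'k)\<close>

definition bilinear_op :: "('k \<Rightarrow> 'v \<Rightarrow> 'v) \<Rightarrow> ('v::ab_group_add \<Rightarrow> 'v \<Rightarrow> 'v) \<Rightarrow> bool" where
  "bilinear_op sc f \<longleftrightarrow>
     (\<forall>x y z. f (x + y) z = f x z + f y z) \<and> (\<forall>x y z. f x (y + z) = f x y + f x z) \<and>
     (\<forall>c x y. f (sc c x) y = sc c (f x y)) \<and> (\<forall>c x y. f x (sc c y) = sc c (f x y))"

definition trilinear_op :: "('k \<Rightarrow> 'v \<Rightarrow> 'v) \<Rightarrow> ('v::ab_group_add \<Rightarrow> 'v \<Rightarrow> 'v \<Rightarrow> 'v) \<Rightarrow> bool" where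
  "trilinear_op sc f \<longleftrightarrow>
     (\<forall>x y z w. f (x + y) z w = f x z w + f y z w) \<and>
     (\<forall>x y z w. f x (y + z) w = f x y w + f x z w) \<and>
     (\<forall>x y z w. f x y (z + w) = f x y z + f x y w) \<and>
     (\<forall>c x y z. f (sc c x) y z = sc c (f x y z)) \<and>
     (\<forall>c x y z. f x (sc c y) z = sc c (f x y z)) \<and>
     (\<forall>c x y z. f x y (sc c z) = sc c (f x y z))"

definition bilinear_form :: "('k \<Rightarrow> 'v \<Rightarrow> 'v) \<Rightarrow> ('v::ab_group_add \<Rightarrow> 'v \<Rightarrow> 'k::field) \<Rightarrow> bool" where
  "bilinear_form sc om \<longleftrightarrow>
     (\<forall>x y z. om (x + y) z = om x z + om y z) \<and> (\<forall>x y z. om x (y + z) = om x y + om x z) \<and>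
     (\<forall>c x y. om (sc c x) y = c * om x y) \<and> (\<forall>c x y. om x (sc c y) = c * om x y)"

definition nondeg_skew_form :: "('k \<Rightarrow> 'v \<Rightarrow> 'v) \<Rightarrow> ('v::ab_group_add \<Rightarrow> 'v \<Rightarrow> 'k::field) \<Rightarrow> bool" where
  "nondeg_skew_form sc om \<longleftrightarrow> bilinear_form sc om \<and> (\<forall>x y. om x y = - om y x) \<and>
     (\<forall>x. (\<forall>y. om x y = 0) \<longrightarrow> x = 0)"

section \<open>Lie-Yamaguti algebras\<close>

definition LY :: "('k \<Rightarrow> 'v \<Rightarrow> 'v) \<Rightarrow> ('v::ab_group_add \<Rightarrow> 'v \<Rightarrow> 'v) \<Rightarrow> ('v \<Rightarrow> 'v \<Rightarrow> 'v \<Rightarrow> 'v) \<Rightarrow> bool" where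
  "LY sc br tr \<longleftrightarrow> bilinear_op sc br \<and> trilinear_op sc tr \<and>
     (\<forall>x y. br x y = - br y x) \<and> (\<forall>x y z. tr x y z = - tr y x z) \<and>
     (\<forall>x y z. br (br x y) z + br (br y z) x + br (br z x) y + tr x y z + tr y z x + tr z x y = 0) \<and>
     (\<forall>x y z w. tr (br x y) z w + tr (br y z) x w + tr (br z x) y w = 0) \<and>
     (\<forall>x y z w. tr x y (br z w) = br (tr x y z) w + br z (tr x y w)) \<and>
     (\<forall>x y z w t. tr x y (tr z w t) = tr (tr x y z) w t + tr z (tr x y w) t + tr z w (tr x y t))"

definition symplectic :: "('k \<Rightarrow> 'v \<Rightarrow> 'v) \<Rightarrow> ('v::ab_group_add \<Rightarrow> 'v \<Rightarrow> 'k::field) \<Rightarrow>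
    ('v \<Rightarrow> 'v \<Rightarrow> 'v) \<Rightarrow> ('v \<Rightarrow> 'v \<Rightarrow> 'v \<Rightarrow> 'v) \<Rightarrow> bool" where
  "symplectic sc om br tr \<longleftrightarrow> nondeg_skew_form sc om \<and>
     (\<forall>x y z. om x (br y z) + om y (br z x) + om z (br x y) = 0) \<and>
     (\<forall>x y z w. om z (tr x y w) - om x (tr w z y) + om y (tr w z x) - om w (tr x y z) = 0)"

section \<open>Pre-Lie-Yamaguti algebras\<close>

definition commC :: "('v::ab_group_add \<Rightarrow> 'v \<Rightarrow> 'v) \<Rightarrow> 'v \<Rightarrow> 'v \<Rightarrow> 'v" where
  "commC mul x y = mul x y - mul y x"

definition assoc3 :: "('v::ab_group_add \<Rightarrow> 'v \<Rightarrow> 'v) \<Rightarrow> 'v \<Rightarrow> 'v \<Rightarrow> 'v \<Rightarrow> 'v" where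
  "assoc3 mul x y z = mul (mul x y) z - mul x (mul y z)"

definition triD :: "('v::ab_group_add \<Rightarrow> 'v \<Rightarrow> 'v) \<Rightarrow> ('v \<Rightarrow> 'v \<Rightarrow> 'v \<Rightarrow> 'v) \<Rightarrow> 'v \<Rightarrow> 'v \<Rightarrow> 'v \<Rightarrow> 'v" where
  "triD mul tri x y z = tri z y x - tri z x y + assoc3 mul y x z - assoc3 mul x y z"

text \<open>Ternary bracket of the subadjacent Lie-Yamaguti algebra.\<close>
definition triC :: "('v::ab_group_add \<Rightarrow> 'v \<Rightarrow> 'v) \<Rightarrow> ('v \<Rightarrow> 'v \<Rightarrow> 'v \<Rightarrow> 'v) \<Rightarrow> 'v \<Rightarrow> 'v \<Rightarrow> 'v \<Rightarrow> 'v" where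
  "triC mul tri x y z = triD mul tri x y z + tri x y z - tri y x z"

definition preLY :: "('k \<Rightarrow> 'v \<Rightarrow> 'v) \<Rightarrow> ('v::ab_group_add \<Rightarrow> 'v \<Rightarrow> 'v) \<Rightarrow> ('v \<Rightarrow> 'v \<Rightarrow> 'v \<Rightarrow> 'v) \<Rightarrow> bool" where
  "preLY sc mul tri \<longleftrightarrow> bilinear_op sc mul \<and> trilinear_op sc tri \<and>
   (\<forall>x y z w. tri z (commC mul x y) w - tri (mul y z) x w + tri (mul x z) y w = 0) \<and>
   (\<forall>x y z w. tri x y (commC mul z w) = mul z (tri x y w) - mul w (tri x y z)) \<and>
   (\<forall>x y z w t. tri (tri x y z) w t - tri (tri x y w) z t - tri x y (triD mul tri z w t)
        - tri x y (tri z w t) + tri x y (tri w z t) + triD mul tri z w (tri x y t) = 0) \<and>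
   (\<forall>x y z w t. tri z (triD mul tri x y w) t + tri z (tri x y w) t - tri z (tri y x w) t
        + tri z w (triD mul tri x y t) + tri z w (tri x y t) - tri z w (tri y x t)
        = triD mul tri x y (tri z w t) - tri (triD mul tri x y z) w t) \<and>
   (\<forall>x y z w. mul (triD mul tri x y z) w + mul (tri x y z) w - mul (tri y x z) w
        = triD mul tri x y (mul z w) - mul z (triD mul tri x y w))"

definition quadratic_preLY :: "('k \<Rightarrow> 'v \<Rightarrow> 'v) \<Rightarrow> ('v::ab_group_add \<Rightarrow> 'v \<Rightarrow> 'v) \<Rightarrow>
    ('v \<Rightarrow> 'v \<Rightarrow> 'v \<Rightarrow> 'v) \<Rightarrow> ('v \<Rightarrow> 'v \<Rightarrow> 'k::field) \<Rightarrow> bool" where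
  "quadratic_preLY sc mul tri om \<longleftrightarrow> preLY sc mul tri \<and> nondeg_skew_form sc om \<and>
     (\<forall>x y z. om (mul x y) z = - om y (commC mul x z)) \<and>
     (\<forall>x y z w. om (tri x y z) w = om x (triC mul tri w z y))"

section \<open>The double \<open>A \<oplus> A*\<close>\<close>

text \<open>A finite-dimensional space A over the field 'k is modelled as \<open>'k^'n\<close> ('n finite);
  its dual A* is modelled as \<open>'k^'n\<close> as well, with pairing \<open>\<langle>\<alpha>,x\<rangle> = \<Sum>i. \<alpha>$i * x$i\<close>.
  An element \<open>x + \<alpha>\<close> of \<open>A \<oplus> A*\<close> is the pair \<open>(x, \<alpha>)\<close>.\<close>

type_synonym ('k, 'n) dbl = "('k ^ 'n) \<times> ('k ^ 'n)"

definition dpair :: "'k::field ^ 'n::finite \<Rightarrow> 'k ^ 'n \<Rightarrow> 'k" where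
  "dpair \<alpha> x = (\<Sum>i\<in>UNIV. \<alpha> $ i * x $ i)"

definition dsc :: "'k::field \<Rightarrow> ('k, 'n::finite) dbl \<Rightarrow> ('k, 'n) dbl" where
  "dsc c X = (c *s fst X, c *s snd X)"

definition omega_p :: "('k::field, 'n::finite) dbl \<Rightarrow> ('k, 'n) dbl \<Rightarrow> 'k" where
  "omega_p X Y = dpair (snd X) (fst Y) - dpair (snd Y) (fst X)"

text \<open>Embeddings of \<open>A\<close> (as \<open>x + 0\<close>) and \<open>A*\<close> (as \<open>0 + \<alpha>\<close>).\<close>
definition inA :: "'k::field ^ 'n::finite \<Rightarrow> ('k, 'n) dbl" where "inA x = (x, 0)"
definition inD :: "'k::field ^ 'n::finite \<Rightarrow> ('k, 'n) dbl" where "inD \<alpha> = (0, \<alpha>)"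

definition isA :: "('k::field, 'n::finite) dbl \<Rightarrow> bool" where "isA X \<longleftrightarrow> snd X = 0"
definition isD :: "('k::field, 'n::finite) dbl \<Rightarrow> bool" where "isD X \<longleftrightarrow> fst X = 0"

text \<open>Manin triple \<open>(A \<oplus> A*; A, A*)\<close> of pre-Lie-Yamaguti algebras with form \<open>\<omega>_p\<close>.\<close>
definition manin_triple :: "(('k::field, 'n::finite) dbl \<Rightarrow> ('k, 'n) dbl \<Rightarrow> ('k, 'n) dbl) \<Rightarrow>
    (('k, 'n) dbl \<Rightarrow> ('k, 'n) dbl \<Rightarrow> ('k, 'n) dbl \<Rightarrow> ('k, 'n) dbl) \<Rightarrow> bool" where
  "manin_triple mul tri \<longleftrightarrow> quadratic_preLY dsc mul tri omega_p \<and>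
     (\<forall>x y. isA (mul (inA x) (inA y))) \<and> (\<forall>x y z. isA (tri (inA x) (inA y) (inA z))) \<and>
     (\<forall>a b. isD (mul (inD a) (inD b))) \<and> (\<forall>a b c. isD (tri (inD a) (inD b) (inD c))) \<and>
     (\<forall>x y :: 'k ^ 'n. omega_p (inA x) (inA y) = 0) \<and> (\<forall>a b :: 'k ^ 'n. omega_p (inD a) (inD b) = 0) \<and>
     (\<forall>x a b. isA (tri (inD a) (inD b) (inA x)) \<and> isA (tri (inA x) (inD a) (inD b))
              \<and> isA (tri (inD a) (inA x) (inD b))) \<and>
     (\<forall>x y a. isD (tri (inA x) (inA y) (inD a)) \<and> isD (tri (inD a) (inA x) (inA y))
              \<and> isD (tri (inA x) (inD a) (inA y)))"

text \<open>Restrictions of operations on \<open>A \<oplus> A*\<close> to the subspace \<open>A\<close>.\<close>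
definition restrA2 :: "(('k::field, 'n::finite) dbl \<Rightarrow> ('k, 'n) dbl \<Rightarrow> ('k, 'n) dbl) \<Rightarrow> 'k ^ 'n \<Rightarrow> 'k ^ 'n \<Rightarrow> 'k ^ 'n" where
  "restrA2 f x y = fst (f (inA x) (inA y))"
definition restrA3 :: "(('k::field, 'n::finite) dbl \<Rightarrow> ('k, 'n) dbl \<Rightarrow> ('k, 'n) dbl \<Rightarrow> ('k, 'n) dbl) \<Rightarrow>
    'k ^ 'n \<Rightarrow> 'k ^ 'n \<Rightarrow> 'k ^ 'n \<Rightarrow> 'k ^ 'n" where
  "restrA3 f x y z = fst (f (inA x) (inA y) (inA z))"

text \<open>Phase space of the Lie-Yamaguti algebra \<open>(\<h>, brh, trh)\<close>, \<open>\<h> = 'k^'n\<close>: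
  a Lie-Yamaguti structure \<open>(br, tr)\<close> on \<open>\<h> \<oplus> \<h>*\<close> with \<open>\<omega>_p\<close> symplectic, \<open>\<h>\<close> (with its
  original brackets) and \<open>\<h>*\<close> subalgebras.\<close>
definition phase_space :: "('k::field ^ 'n::finite \<Rightarrow> 'k ^ 'n \<Rightarrow> 'k ^ 'n) \<Rightarrow> ('k ^ 'n \<Rightarrow> 'k ^ 'n \<Rightarrow> 'k ^ 'n \<Rightarrow> 'k ^ 'n) \<Rightarrow>
    (('k, 'n) dbl \<Rightarrow> ('k, 'n) dbl \<Rightarrow> ('k, 'n) dbl) \<Rightarrow>
    (('k, 'n) dbl \<Rightarrow> ('k, 'n) dbl \<Rightarrow> ('k, 'n) dbl \<Rightarrow> ('k, 'n) dbl) \<Rightarrow> bool" where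
  "phase_space brh trh br tr \<longleftrightarrow> LY (*s) brh trh \<and> LY dsc br tr \<and> symplectic dsc omega_p br tr \<and>
     (\<forall>x y. br (inA x) (inA y) = inA (brh x y)) \<and>
     (\<forall>x y z. tr (inA x) (inA y) (inA z) = inA (trh x y z)) \<and>
     (\<forall>a b. isD (br (inD a) (inD b))) \<and> (\<forall>a b c. isD (tr (inD a) (inD b) (inD c)))"

definition perfect :: "(('k::field, 'n::finite) dbl \<Rightarrow> ('k, 'n) dbl \<Rightarrow> ('k, 'n) dbl \<Rightarrow> ('k, 'n) dbl) \<Rightarrow> bool" where
  "perfect tr \<longleftrightarrow> (\<forall>x y a b.
     isA (tr (inD a) (inD b) (inA x)) \<and> isA (tr (inA x) (inD a) (inD b)) \<and>
     isD (tr (inA x) (inA y) (inD a)) \<and> isD (tr (inD a) (inA x) (inA y)))"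

text \<open>The pre-Lie-Yamaguti structure induced on \<open>\<h> \<oplus> \<h>*\<close> by
  \<open>\<omega>_p(X*Y,Z) = -\<omega>_p(Y,[X,Z])\<close> and \<open>\<omega>_p({X,Y,Z},W) = \<omega>_p(X,[[W,Z,Y]])\<close>.\<close>
definition ind_mul :: "(('k::field, 'n::finite) dbl \<Rightarrow> ('k, 'n) dbl \<Rightarrow> ('k, 'n) dbl) \<Rightarrow>
    ('k, 'n) dbl \<Rightarrow> ('k, 'n) dbl \<Rightarrow> ('k, 'n) dbl" where
  "ind_mul br X Y = (THE P. \<forall>Z. omega_p P Z = - omega_p Y (br X Z))"

definition ind_tri :: "(('k::field, 'n::finite) dbl \<Rightarrow> ('k, 'n) dbl \<Rightarrow> ('k, 'n) dbl \<Rightarrow> ('k, 'n) dbl) \<Rightarrow>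
    ('k, 'n) dbl \<Rightarrow> ('k, 'n) dbl \<Rightarrow> ('k, 'n) dbl \<Rightarrow> ('k, 'n) dbl" where
  "ind_tri tr X Y Z = (THE P. \<forall>W. omega_p P W = omega_p X (tr W Z Y))"

end

theory Submission
  imports Defs
begin



lemma neg_from_add: "(a::'a::ab_group_add) + b = 0 \<Longrightarrow> b = - a" by (simp add: add_eq_0_iff)

locale s0 =
  fixes om :: "'v::ab_group_add \<Rightarrow> 'v \<Rightarrow> 'k::field"
    and mul :: "'v \<Rightarrow> 'v \<Rightarrow> 'v" and tri :: "'v \<Rightarrow> 'v \<Rightarrow> 'v \<Rightarrow> 'v"
  assumes omL: "om (x + y) z = om x z + om y z"
    and om_skew: "om x y = - om y x"
    and om_nd: "(\<And>y. om x y = 0) \<Longrightarrow> x = 0"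
    and mulL: "mul (x + y) z = mul x z + mul y z"
    and mulR: "mul x (y + z) = mul x y + mul x z"
    and tri1: "tri (x + y) z w = tri x z w + tri y z w"
    and tri2: "tri x (y + z) w = tri x y w + tri x z w"
    and tri3: "tri x y (z + w) = tri x y z + tri x y w"
begin

lemma omR: "om x (y + z) = om x y + om x z"
  using omL[of y z x] om_skew by (metis minus_add_distrib)
lemma om0L[simp]: "om 0 x = 0" using omL[of 0 0 x] by (metis add_left_imp_eq add.right_neutral)
lemma om0R[simp]: "om x 0 = 0" using omR[of x 0 0] by (metis add_left_imp_eq add.right_neutral)
lemma omNL: "om (- x) y = - om x y" using omL[of x "-x" y] by (simp add: add_eq_0_iff)
lemma omNR: "om x (- y) = - om x y" using omR[of x y "-y"] by (simp add: add_eq_0_iff)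
lemma omDL: "om (x - y) z = om x z - om y z" by (simp only: diff_conv_add_uminus omL omNL)
lemma omDR: "om x (y - z) = om x y - om x z" by (simp only: diff_conv_add_uminus omR omNR)
lemmas omlin = omL omR omNL omNR omDL omDR

lemma om_eq0I: "(\<And>y. om y x = 0) \<Longrightarrow> x = 0"
  using om_nd om_skew by (metis neg_equal_0_iff_equal)
lemma om_eqI: "(\<And>y. om x y = om x' y) \<Longrightarrow> x = x'"
  using om_nd[of "x - x'"] by (simp add: omDL)

lemma mul0L[simp]: "mul 0 x = 0" using mulL[of 0 0 x] by (metis add_left_imp_eq add.right_neutral)
lemma mul0R[simp]: "mul x 0 = 0" using mulR[of x 0 0] by (metis add_left_imp_eq add.right_neutral)
lemma mulNL: "mul (- x) y = - mul x y" using mulL[of x "-x" y] by (simp add: add_eq_0_iff)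
lemma mulNR: "mul x (- y) = - mul x y" using mulR[of x y "-y"] by (simp add: add_eq_0_iff)
lemma mulDL: "mul (x - y) z = mul x z - mul y z" by (simp only: diff_conv_add_uminus mulL mulNL)
lemma mulDR: "mul x (y - z) = mul x y - mul x z" by (simp only: diff_conv_add_uminus mulR mulNR)
lemmas mullin = mulL mulR mulNL mulNR mulDL mulDR

lemma tri0_1[simp]: "tri 0 y z = 0" using tri1[of 0 0 y z] by (metis add_left_imp_eq add.right_neutral)
lemma tri0_2[simp]: "tri x 0 z = 0" using tri2[of x 0 0 z] by (metis add_left_imp_eq add.right_neutral)
lemma tri0_3[simp]: "tri x y 0 = 0" using tri3[of x y 0 0] by (metis add_left_imp_eq add.right_neutral)
lemma triN1: "tri (- x) y z = - tri x y z" using tri1[of x "-x" y z] by (simp add: add_eq_0_iff)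
lemma triN2: "tri x (- y) z = - tri x y z" using tri2[of x y "-y" z] by (simp add: add_eq_0_iff)
lemma triN3: "tri x y (- z) = - tri x y z" using tri3[of x y z "-z"] by (simp add: add_eq_0_iff)
lemma triD1: "tri (x - x') y z = tri x y z - tri x' y z" by (simp only: diff_conv_add_uminus tri1 triN1)
lemma triD2: "tri x (y - y') z = tri x y z - tri x y' z" by (simp only: diff_conv_add_uminus tri2 triN2)
lemma triD3: "tri x y (z - z') = tri x y z - tri x y z'" by (simp only: diff_conv_add_uminus tri3 triN3)
lemmas trilin = tri1 tri2 tri3 triN1 triN2 triN3 triD1 triD2 triD3

lemma triC_skew: "triC mul tri x y z = - triC mul tri y x z"
proof (rule om_eqI)
  fix W show "om (triC mul tri x y z) W = om (- triC mul tri y x z) W"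
    by (simp add: triC_def triD_def assoc3_def omlin)
qed

lemma LY1_C: "commC mul (commC mul x y) z + commC mul (commC mul y z) x + commC mul (commC mul z x) y
   + triC mul tri x y z + triC mul tri y z x + triC mul tri z x y = 0"
proof (rule om_nd)
  fix W show "om (commC mul (commC mul x y) z + commC mul (commC mul y z) x + commC mul (commC mul z x) y
   + triC mul tri x y z + triC mul tri y z x + triC mul tri z x y) W = 0"
    by (simp add: triC_def triD_def assoc3_def commC_def omlin mullin)
qed

end

locale sb = s0 om mul tri for om :: "'v::ab_group_add \<Rightarrow> 'v \<Rightarrow> 'k::field" and mul tri +
  fixes br :: "'v \<Rightarrow> 'v \<Rightarrow> 'v" and trt :: "'v \<Rightarrow> 'v \<Rightarrow> 'v \<Rightarrow> 'v"
  assumes brL: "br (x + y) z = br x z + br y z"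
    and br_skew: "br x y = - br y x"
    and trt1: "trt (x + y) z w = trt x z w + trt y z w"
    and trt3: "trt x y (z + w) = trt x y z + trt x y w"
    and trt_skew: "trt x y z = - trt y x z"
    and R1: "om (mul x y) z = - om y (br x z)"
    and R2: "om (tri x y z) w = om x (trt w z y)"
    and R3: "br x y = mul x y - mul y x"
    and LY1: "br (br x y) z + br (br y z) x + br (br z x) y + trt x y z + trt y z x + trt z x y = 0"
begin

lemma brR: "br x (y + z) = br x y + br x z"
  by (metis br_skew brL minus_add_distrib)
lemma br0L[simp]: "br 0 x = 0" using brL[of 0 0 x] by (metis add_left_imp_eq add.right_neutral)
lemma br0R[simp]: "br x 0 = 0" using brR[of x 0 0] by (metis add_left_imp_eq add.right_neutral)
lemma brNL: "br (- x) y = - br x y" using brL[of x "-x" y] by (simp add: add_eq_0_iff)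
lemma brNR: "br x (- y) = - br x y" using brR[of x y "-y"] by (simp add: add_eq_0_iff)
lemma brDL: "br (x - y) z = br x z - br y z" by (simp only: diff_conv_add_uminus brL brNL)
lemma brDR: "br x (y - z) = br x y - br x z" by (simp only: diff_conv_add_uminus brR brNR)
lemmas brlin = brL brR brNL brNR brDL brDR

lemma trt2: "trt x (y + z) w = trt x y w + trt x z w"
  by (metis trt_skew trt1 minus_add_distrib)
lemma trt0_1[simp]: "trt 0 y z = 0" using trt1[of 0 0 y z] by (metis add_left_imp_eq add.right_neutral)
lemma trt0_2[simp]: "trt x 0 z = 0" using trt2[of x 0 0 z] by (metis add_left_imp_eq add.right_neutral)
lemma trt0_3[simp]: "trt x y 0 = 0" using trt3[of x y 0 0] by (metis add_left_imp_eq add.right_neutral)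
lemma trtN1: "trt (- x) y z = - trt x y z" using trt1[of x "-x" y z] by (simp add: add_eq_0_iff)
lemma trtN2: "trt x (- y) z = - trt x y z" using trt2[of x y "-y" z] by (simp add: add_eq_0_iff)
lemma trtN3: "trt x y (- z) = - trt x y z" using trt3[of x y z "-z"] by (simp add: add_eq_0_iff)
lemma trtD1: "trt (x - x') y z = trt x y z - trt x' y z" by (simp only: diff_conv_add_uminus trt1 trtN1)
lemma trtD2: "trt x (y - y') z = trt x y z - trt x y' z" by (simp only: diff_conv_add_uminus trt2 trtN2)
lemma trtD3: "trt x y (z - z') = trt x y z - trt x y z'" by (simp only: diff_conv_add_uminus trt3 trtN3)
lemmas trtlin = trt1 trt2 trt3 trtN1 trtN2 trtN3 trtD1 trtD2 trtD3

lemma triD_adj: "om (triD mul tri X Y Z) W = - om Z (trt X Y W)"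
proof -
  have h: "om Z (br (br X Y) W + br (br Y W) X + br (br W X) Y + trt X Y W + trt Y W X + trt W X Y) = 0"
    using LY1[of X Y W] by simp
  have s1: "om Z (br (br Y W) X) = - om Z (br X (br Y W))" by (metis br_skew omNR)
  have s2: "om Z (br (br W X) Y) = om Z (br Y (br X W))" by (metis br_skew brNR)
  have s3: "om Z (trt Y W X) = - om Z (trt W Y X)" by (metis trt_skew omNR)
  have a3: "om (mul (mul Y X) Z) W - om (mul (mul X Y) Z) W = om Z (br (br X Y) W)"
    by (simp add: R1 R3[of X Y] brlin omlin)
  have a4: "om (mul Y (mul X Z)) W = om Z (br X (br Y W))" by (simp add: R1 omNR)
  have a5: "om (mul X (mul Y Z)) W = om Z (br Y (br X W))" by (simp add: R1 omNR)
  have e: "om (triD mul tri X Y Z) W = om Z (trt W X Y) - om Z (trt W Y X)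
     + (om (mul (mul Y X) Z) W - om (mul (mul X Y) Z) W) - om (mul Y (mul X Z)) W + om (mul X (mul Y Z)) W"
    by (simp add: triD_def assoc3_def omlin R2 algebra_simps)
  show ?thesis using h s1 s2 s3 a3 a4 a5 e by (simp only: omlin) algebra
qed

lemma R4_from_ST:
  assumes ST: "\<And>x y z w. om z (trt x y w) - om x (trt w z y) + om y (trt w z x) - om w (trt x y z) = 0"
  shows "triC mul tri X Y Z = trt X Y Z"
proof (rule om_eqI)
  fix W
  have "om (triC mul tri X Y Z) W = - om Z (trt X Y W) + om X (trt W Z Y) - om Y (trt W Z X)"
    by (simp add: triC_def omlin triD_adj R2)
  also have "\<dots> = om (trt X Y Z) W" using ST[where x=X and y=Y and z=Z and w=W] om_skew[of "trt X Y Z" W] by algebra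
  finally show "om (triC mul tri X Y Z) W = om (trt X Y Z) W" .
qed

lemma cyc3: "3 * (om x (br y z) + om y (br z x) + om z (br x y)) = 0"
proof -
  have f: "\<And>a b c. om a (br b c) = om c (mul b a)"
    using R1 om_skew by (metis minus_minus)
  have e1: "om x (br y z) + om y (br z x) + om z (br x y) = om z (mul y x) + om x (mul z y) + om y (mul x z)"
    by (simp add: f)
  have e2: "om x (br y z) + om y (br z x) + om z (br x y) = - (om y (mul z x) + om z (mul x y) + om x (mul y z))"
    by (metis f br_skew omNR minus_add_distrib)
  have e3: "om x (br y z) + om y (br z x) + om z (br x y) = (om x (mul y z) - om x (mul z y)) + (om y (mul z x) - om y (mul x z))
      + (om z (mul x y) - om z (mul y x))"
    by (simp add: R3 omlin)
  show ?thesis using e1 e2 e3 by algebra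
qed

end


locale sb2 = sb om mul tri br trt for om :: "'v::ab_group_add \<Rightarrow> 'v \<Rightarrow> 'k::field" and mul tri br trt +
  assumes R4: "triC mul tri x y z = trt x y z"
begin

lemma commC_br: "commC mul x y = br x y" by (simp add: commC_def R3)

lemma ST: "om z (trt x y w) - om x (trt w z y) + om y (trt w z x) - om w (trt x y z) = 0"
proof -
  have "om (trt x y z) w = - om z (trt x y w) + om x (trt w z y) - om y (trt w z x)"
    by (simp add: R4[symmetric] triC_def omlin triD_adj R2)
  then show ?thesis using om_skew[of "trt x y z" w] by algebra
qed

lemma pair_P1: "om (tri z (commC mul x y) w - tri (mul y z) x w + tri (mul x z) y w) t
   = om z (trt t w (br x y) - (br (trt t w x) y + br x (trt t w y)))"
proof -
  have "om z (br y (trt t w x)) = - om z (br (trt t w x) y)" by (metis br_skew omNR)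
  then show ?thesis by (simp add: omlin trilin commC_br R1 R2 brlin trtlin)
qed

lemma pair_P2: "om (tri x y (commC mul z w) - (mul z (tri x y w) - mul w (tri x y z))) t
   = - om x (trt (br t z) w y + trt (br z w) t y + trt (br w t) z y)"
proof -
  have "om x (trt t (br z w) y) = - om x (trt (br z w) t y)" by (metis trt_skew omNR)
  moreover have "om x (trt (br z t) w y) = - om x (trt (br t z) w y)" by (metis br_skew trtN1 omNR)
  ultimately show ?thesis by (simp add: omlin commC_br R1 R2 brlin trtlin)
qed

lemma pair_P3: "om (tri (tri x y z) w t - tri (tri x y w) z t - tri x y (triD mul tri z w t)
        - tri x y (tri z w t) + tri x y (tri w z t) + triD mul tri z w (tri x y t)) s
   = om x ((trt z w (trt s t y) - (trt (trt z w s) t y + trt s (trt z w t) y + trt s t (trt z w y)))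
         + (trt s t (trt z w y) - (trt (trt s t z) w y + trt z (trt s t w) y + trt z w (trt s t y))))"
proof -
  have g: "om x (trt s (triD mul tri z w t) y) + om x (trt s (tri z w t) y) - om x (trt s (tri w z t) y) = om x (trt s (trt z w t) y)"
    by (simp only: R4[of z w t, symmetric]) (simp add: triC_def trtlin omlin)
  have "om x (trt (trt s t w) z y) = - om x (trt z (trt s t w) y)" by (metis trt_skew omNR)
  then show ?thesis using g
    by (simp add: omlin triD_adj R1 R2 trtlin trilin) algebra
qed


lemma pair_P4: "om ((tri z (triD mul tri x y w) t + tri z (tri x y w) t - tri z (tri y x w) t
        + tri z w (triD mul tri x y t) + tri z w (tri x y t) - tri z w (tri y x t))
        - (triD mul tri x y (tri z w t) - tri (triD mul tri x y z) w t)) s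
   = - om z (trt x y (trt s t w) - (trt (trt x y s) t w + trt s (trt x y t) w + trt s t (trt x y w)))"
proof -
  have g1: "om z (trt s t (triD mul tri x y w)) + om z (trt s t (tri x y w)) - om z (trt s t (tri y x w)) = om z (trt s t (trt x y w))"
    by (simp only: R4[of x y w, symmetric]) (simp add: triC_def trtlin omlin)
  have g2: "om z (trt s (triD mul tri x y t) w) + om z (trt s (tri x y t) w) - om z (trt s (tri y x t) w) = om z (trt s (trt x y t) w)"
    by (simp only: R4[of x y t, symmetric]) (simp add: triC_def trtlin omlin)
  show ?thesis using g1 g2
    by (simp add: omlin triD_adj R1 R2 trtlin trilin add_diff_eq)
qed

lemma pair_P5: "om ((mul (triD mul tri x y z) w + mul (tri x y z) w - mul (tri y x z) w)
        - (triD mul tri x y (mul z w) - mul z (triD mul tri x y w))) t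
   = om w (trt x y (br z t) - (br (trt x y z) t + br z (trt x y t)))"
proof -
  have g: "mul (triD mul tri x y z) w + mul (tri x y z) w - mul (tri y x z) w = mul (trt x y z) w"
    by (simp only: R4[of x y z, symmetric]) (simp add: triC_def mullin)
  show ?thesis unfolding g
    by (simp add: omlin triD_adj R1 R2 trtlin trilin brlin)
qed


lemma LY_of_P:
  assumes P1: "\<And>x y z w. tri z (commC mul x y) w - tri (mul y z) x w + tri (mul x z) y w = 0"
    and P2: "\<And>x y z w. tri x y (commC mul z w) = mul z (tri x y w) - mul w (tri x y z)"
    and P4: "\<And>x y z w t. tri z (triD mul tri x y w) t + tri z (tri x y w) t - tri z (tri y x w) t
        + tri z w (triD mul tri x y t) + tri z w (tri x y t) - tri z w (tri y x t)
        = triD mul tri x y (tri z w t) - tri (triD mul tri x y z) w t"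
  shows "trt (br x y) z w + trt (br y z) x w + trt (br z x) y w = 0"
    and "trt x y (br z w) = br (trt x y z) w + br z (trt x y w)"
    and "trt x y (trt z w t) = trt (trt x y z) w t + trt z (trt x y w) t + trt z w (trt x y t)"
proof -
  show "trt (br x y) z w + trt (br y z) x w + trt (br z x) y w = 0"
  proof (rule om_eq0I)
    fix u
    have e: "tri u w (commC mul y z) - (mul y (tri u w z) - mul z (tri u w y)) = 0"
      using P2[where x=u and y=w and z=y and w=z] by (simp only: diff_self)
    have "om (tri u w (commC mul y z) - (mul y (tri u w z) - mul z (tri u w y))) x
       = - om u (trt (br x y) z w + trt (br y z) x w + trt (br z x) y w)" by (rule pair_P2)
    then show "om u (trt (br x y) z w + trt (br y z) x w + trt (br z x) y w) = 0"
      unfolding e om0L by (simp only: neg_0_equal_iff_equal)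
  qed
  show "trt x y (br z w) = br (trt x y z) w + br z (trt x y w)"
  proof -
    have "trt x y (br z w) - (br (trt x y z) w + br z (trt x y w)) = 0"
    proof (rule om_eq0I)
      fix u
      have "om (tri u (commC mul z w) y - tri (mul w u) z y + tri (mul z u) w y) x
        = om u (trt x y (br z w) - (br (trt x y z) w + br z (trt x y w)))" by (rule pair_P1)
      then show "om u (trt x y (br z w) - (br (trt x y z) w + br z (trt x y w))) = 0"
        unfolding P1[where x=z and y=w and z=u and w=y] om0L by (rule sym)
    qed
    then show ?thesis by (simp only: right_minus_eq)
  qed
  show "trt x y (trt z w t) = trt (trt x y z) w t + trt z (trt x y w) t + trt z w (trt x y t)"
  proof -
    have "trt x y (trt z w t) - (trt (trt x y z) w t + trt z (trt x y w) t + trt z w (trt x y t)) = 0"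
    proof (rule om_eq0I)
      fix u
      have "om ((tri u (triD mul tri x y t) w + tri u (tri x y t) w - tri u (tri y x t) w
        + tri u t (triD mul tri x y w) + tri u t (tri x y w) - tri u t (tri y x w))
        - (triD mul tri x y (tri u t w) - tri (triD mul tri x y u) t w)) z
        = - om u (trt x y (trt z w t) - (trt (trt x y z) w t + trt z (trt x y w) t + trt z w (trt x y t)))"
        by (rule pair_P4)
      then show "om u (trt x y (trt z w t) - (trt (trt x y z) w t + trt z (trt x y w) t + trt z w (trt x y t))) = 0"
        unfolding P4[where x=x and y=y and w=t and z=u and t=w] diff_self om0L
        by (simp only: neg_0_equal_iff_equal)
    qed
    then show ?thesis by (simp only: right_minus_eq)
  qed
qed


lemma P_of_LY:
  assumes L2: "\<And>x y z w. trt (br x y) z w + trt (br y z) x w + trt (br z x) y w = 0"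
    and L3: "\<And>x y z w. trt x y (br z w) = br (trt x y z) w + br z (trt x y w)"
    and L4: "\<And>x y z w t. trt x y (trt z w t) = trt (trt x y z) w t + trt z (trt x y w) t + trt z w (trt x y t)"
  shows "tri z (commC mul x y) w - tri (mul y z) x w + tri (mul x z) y w = 0"
    and "tri x y (commC mul z w) = mul z (tri x y w) - mul w (tri x y z)"
    and "tri (tri x y z) w t - tri (tri x y w) z t - tri x y (triD mul tri z w t)
        - tri x y (tri z w t) + tri x y (tri w z t) + triD mul tri z w (tri x y t) = 0"
    and "tri z (triD mul tri x y w) t + tri z (tri x y w) t - tri z (tri y x w) t
        + tri z w (triD mul tri x y t) + tri z w (tri x y t) - tri z w (tri y x t)
        = triD mul tri x y (tri z w t) - tri (triD mul tri x y z) w t"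
    and "mul (triD mul tri x y z) w + mul (tri x y z) w - mul (tri y x z) w
        = triD mul tri x y (mul z w) - mul z (triD mul tri x y w)"
proof -
  have l3: "\<And>x y z w. trt x y (br z w) - (br (trt x y z) w + br z (trt x y w)) = 0"
    unfolding right_minus_eq by (rule L3)
  have l4: "\<And>x y z w t. trt x y (trt z w t) - (trt (trt x y z) w t + trt z (trt x y w) t + trt z w (trt x y t)) = 0"
    unfolding right_minus_eq by (rule L4)
  show "tri z (commC mul x y) w - tri (mul y z) x w + tri (mul x z) y w = 0"
    by (rule om_nd) (simp only: pair_P1 l3 om0R)
  show "tri x y (commC mul z w) = mul z (tri x y w) - mul w (tri x y z)"
  proof -
    have "tri x y (commC mul z w) - (mul z (tri x y w) - mul w (tri x y z)) = 0"
      by (rule om_nd) (simp only: pair_P2 L2 om0R minus_zero)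
    then show ?thesis by (simp only: right_minus_eq)
  qed
  show "tri (tri x y z) w t - tri (tri x y w) z t - tri x y (triD mul tri z w t)
        - tri x y (tri z w t) + tri x y (tri w z t) + triD mul tri z w (tri x y t) = 0"
    by (rule om_nd) (simp only: pair_P3 l4 om0R add_0)
  show "tri z (triD mul tri x y w) t + tri z (tri x y w) t - tri z (tri y x w) t
        + tri z w (triD mul tri x y t) + tri z w (tri x y t) - tri z w (tri y x t)
        = triD mul tri x y (tri z w t) - tri (triD mul tri x y z) w t"
  proof -
    have "(tri z (triD mul tri x y w) t + tri z (tri x y w) t - tri z (tri y x w) t
        + tri z w (triD mul tri x y t) + tri z w (tri x y t) - tri z w (tri y x t))
        - (triD mul tri x y (tri z w t) - tri (triD mul tri x y z) w t) = 0"
      by (rule om_nd) (simp only: pair_P4 l4 om0R minus_zero)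
    then show ?thesis by (simp only: right_minus_eq)
  qed
  show "mul (triD mul tri x y z) w + mul (tri x y z) w - mul (tri y x z) w
        = triD mul tri x y (mul z w) - mul z (triD mul tri x y w)"
  proof -
    have "(mul (triD mul tri x y z) w + mul (tri x y z) w - mul (tri y x z) w)
        - (triD mul tri x y (mul z w) - mul z (triD mul tri x y w)) = 0"
      by (rule om_nd) (simp only: pair_P5 l3 om0R)
    then show ?thesis by (simp only: right_minus_eq)
  qed
qed

end

lemma dsc_add: "dsc c (X + Y) = dsc c X + dsc c Y"
  by (simp add: dsc_def)
lemma dsc_minus: "dsc c (- X) = - dsc c X"
  by (simp add: dsc_def vec_eq_iff)
lemma dsc_diff: "dsc c (X - Y) = dsc c X - dsc c Y"
  by (simp add: dsc_def)

lemma dpair_addL: "dpair (a + b) x = dpair a x + dpair b x"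
  by (simp add: dpair_def distrib_right sum.distrib)
lemma dpair_addR: "dpair a (x + y) = dpair a x + dpair a y"
  by (simp add: dpair_def distrib_left sum.distrib)
lemma dpair_sL: "dpair (c *s a) x = c * dpair a x"
  by (simp add: dpair_def sum_distrib_left mult.assoc)
lemma dpair_sR: "dpair a (c *s x) = c * dpair a x"
  by (simp add: dpair_def sum_distrib_left mult.left_commute)
lemma dpair_axisR: "dpair a (axis i 1) = a $ i"
proof -
  have "dpair a (axis i 1) = (\<Sum>j\<in>UNIV. if j = i then a $ j else 0)"
    unfolding dpair_def by (rule sum.cong) (auto simp: axis_def)
  then show ?thesis by simp
qed
lemma dpair_axisL: "dpair (axis i 1) x = x $ i"
proof -
  have "dpair (axis i 1) x = (\<Sum>j\<in>UNIV. if j = i then x $ j else 0)"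
    unfolding dpair_def by (rule sum.cong) (auto simp: axis_def)
  then show ?thesis by simp
qed

lemma dpair0L[simp]: "dpair 0 x = 0" by (simp add: dpair_def)
lemma dpair0R[simp]: "dpair a 0 = 0" by (simp add: dpair_def)

lemma omega_p_bil: "bilinear_form dsc (omega_p :: ('k::field,'n::finite) dbl \<Rightarrow> _)"
  unfolding bilinear_form_def omega_p_def dsc_def
  by (simp add: dpair_addL dpair_addR dpair_sL dpair_sR algebra_simps)

lemma omega_p_nd: "nondeg_skew_form dsc (omega_p :: ('k::field,'n::finite) dbl \<Rightarrow> _)"
  unfolding nondeg_skew_form_def
proof (intro conjI allI impI)
  show "bilinear_form dsc (omega_p :: ('k::field,'n::finite) dbl \<Rightarrow> _)" by (rule omega_p_bil)
  fix x y :: "('k,'n) dbl"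
  show "omega_p x y = - omega_p y x" by (simp add: omega_p_def)
next
  fix x :: "('k,'n) dbl"
  assume h: "\<forall>y. omega_p x y = 0"
  have "snd x $ i = 0" for i using h[rule_format, of "(axis i 1, 0)"]
    by (simp add: omega_p_def dpair_axisR)
  moreover have "fst x $ i = 0" for i using h[rule_format, of "(0, axis i 1)"]
    by (simp add: omega_p_def dpair_axisL)
  ultimately show "x = 0" by (simp add: prod_eq_iff vec_eq_iff)
qed


lemma lin_vec_expand:
  fixes g :: "'k::field ^ 'n::finite \<Rightarrow> 'k"
  assumes add: "\<And>x y. g (x + y) = g x + g y" and sc: "\<And>c x. g (c *s x) = c * g x"
  shows "g x = (\<Sum>i\<in>UNIV. x $ i * g (axis i 1))"
proof -
  interpret additive g by (unfold_locales) (rule add)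
  have "g x = g (\<Sum>i\<in>UNIV. x $ i *s axis i 1)" by (simp add: basis_expansion)
  also have "\<dots> = (\<Sum>i\<in>UNIV. g (x $ i *s axis i 1))" by (rule sum)
  finally show ?thesis by (simp add: sc)
qed


lemma omega_p_repr:
  fixes f :: "('k::field,'n::finite) dbl \<Rightarrow> 'k"
  assumes add: "\<And>X Y. f (X + Y) = f X + f Y" and sc: "\<And>c X. f (dsc c X) = c * f X"
  shows "\<exists>P. \<forall>Z. omega_p P Z = f Z"
proof -
  define P :: "('k,'n) dbl" where "P = ((\<chi> i. - f (0, axis i 1)), (\<chi> i. f (axis i 1, 0)))"
  have a1: "f (x + y, 0) = f (x, 0) + f (y, 0)" for x y using add[of "(x,0)" "(y,0)"] by simp
  have s1: "f (c *s x, 0) = c * f (x, 0)" for c x using sc[of c "(x,0)"] by (simp add: dsc_def)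
  have a2: "f (0, x + y) = f (0, x) + f (0, y)" for x y using add[of "(0,x)" "(0,y)"] by simp
  have s2: "f (0, c *s x) = c * f (0, x)" for c x using sc[of c "(0,x)"] by (simp add: dsc_def)
  have g1: "f (y, 0) = (\<Sum>i\<in>UNIV. y $ i * f (axis i 1, 0))" for y
    by (rule lin_vec_expand[where g="\<lambda>y. f (y, 0)"]) (simp_all only: a1 s1)
  have g2: "f (0, b) = (\<Sum>i\<in>UNIV. b $ i * f (0, axis i 1))" for b
    by (rule lin_vec_expand[where g="\<lambda>y. f (0, y)"]) (simp_all only: a2 s2)
  have "omega_p P Z = f Z" for Z
  proof -
    obtain y b where Z: "Z = (y, b)" by (cases Z)
    have fz: "f Z = f (y, 0) + f (0, b)" using add[of "(y,0)" "(0,b)"] Z by simp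
    have "omega_p P Z = (\<Sum>i\<in>UNIV. f (axis i 1, 0) * y $ i) - (\<Sum>i\<in>UNIV. b $ i * - f (0, axis i 1))"
      by (simp add: Z omega_p_def P_def dpair_def)
    also have "\<dots> = (\<Sum>i\<in>UNIV. y $ i * f (axis i 1, 0)) + (\<Sum>i\<in>UNIV. b $ i * f (0, axis i 1))"
      by (simp add: sum_negf mult.commute)
    finally show ?thesis unfolding fz g1[of y] g2[of b] .
  qed
  then show ?thesis by blast
qed



lemma bil_props:
  assumes "bilinear_op sc f"
  shows "f (x + y) z = f x z + f y z" "f x (y + z) = f x y + f x z"
    "f (sc c x) y = sc c (f x y)" "f x (sc c y) = sc c (f x y)"
  using assms unfolding bilinear_op_def by blast+

lemma tril_props:
  assumes "trilinear_op sc f"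
  shows "f (x + y) z w = f x z w + f y z w" "f x (y + z) w = f x y w + f x z w"
    "f x y (z + w) = f x y z + f x y w"
    "f (sc c x) y z = sc c (f x y z)" "f x (sc c y) z = sc c (f x y z)" "f x y (sc c z) = sc c (f x y z)"
  using assms unfolding trilinear_op_def by simp_all

lemma opL: "omega_p (X + Y) Z = omega_p X Z + omega_p Y Z"
  using omega_p_bil unfolding bilinear_form_def by blast
lemma opS: "omega_p (dsc c X) Z = c * omega_p X Z"
  using omega_p_bil unfolding bilinear_form_def by blast
lemma opSR: "omega_p Z (dsc c X) = c * omega_p Z X"
  using omega_p_bil unfolding bilinear_form_def by blast
lemma op_skew: "omega_p X Y = - omega_p Y X"
  using omega_p_nd unfolding nondeg_skew_form_def by blast
lemma op_nd: "(\<And>Y. omega_p X Y = 0) \<Longrightarrow> X = 0"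
  using omega_p_nd unfolding nondeg_skew_form_def by blast

text \<open>Linearity of the subadjacent brackets.\<close>
lemma lin_C:
  fixes mul :: "('k::field,'n::finite) dbl \<Rightarrow> _ \<Rightarrow> _" and tri
  assumes bm: "bilinear_op dsc mul" and tt: "trilinear_op dsc tri"
  shows "bilinear_op dsc (commC mul)" "trilinear_op dsc (triC mul tri)"
proof -
  interpret s0 omega_p mul tri
    apply unfold_locales
    apply (rule opL) apply (rule op_skew) apply (erule op_nd)
    apply (simp_all add: bil_props[OF bm] tril_props[OF tt])
    done
  note ml = bil_props[OF bm] and tl = tril_props[OF tt]
  show "bilinear_op dsc (commC mul)"
    unfolding bilinear_op_def commC_def
    by (simp add: ml mullin dsc_diff algebra_simps)
  show "trilinear_op dsc (triC mul tri)"
    unfolding trilinear_op_def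
  proof (intro conjI allI)
    fix x y z w
    show "triC mul tri (x + y) z w = triC mul tri x z w + triC mul tri y z w"
      by (rule om_eqI) (simp add: triC_def triD_def assoc3_def omlin mullin trilin)
    show "triC mul tri x (y + z) w = triC mul tri x y w + triC mul tri x z w"
      by (rule om_eqI) (simp add: triC_def triD_def assoc3_def omlin mullin trilin)
    show "triC mul tri x y (z + w) = triC mul tri x y z + triC mul tri x y w"
      by (rule om_eqI) (simp add: triC_def triD_def assoc3_def omlin mullin trilin)
  next
    fix c x y z
    show "triC mul tri (dsc c x) y z = dsc c (triC mul tri x y z)"
      by (rule om_eqI) (simp add: triC_def triD_def assoc3_def omlin mullin trilin ml tl opS algebra_simps)
    show "triC mul tri x (dsc c y) z = dsc c (triC mul tri x y z)"
      by (rule om_eqI) (simp add: triC_def triD_def assoc3_def omlin mullin trilin ml tl opS algebra_simps)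
    show "triC mul tri x y (dsc c z) = dsc c (triC mul tri x y z)"
      by (rule om_eqI) (simp add: triC_def triD_def assoc3_def omlin mullin trilin ml tl opS algebra_simps)
  qed
qed


lemma inA_add: "inA (a + b) = inA a + inA b" by (simp add: inA_def)
lemma inA_neg: "inA (- a) = - inA a" by (simp add: inA_def)
lemma inA_diff: "inA (a - b) = inA a - inA b" by (simp add: inA_def)
lemma inA_sc: "inA (c *s a) = dsc c (inA a)" by (simp add: inA_def dsc_def)
lemma inA_0: "inA 0 = 0" by (simp add: inA_def zero_prod_def)
lemma inA_injI: "inA a = inA b \<Longrightarrow> a = b" by (simp add: inA_def)
lemmas inA_push = inA_add inA_neg inA_diff inA_sc inA_0

lemma LY_transfer:
  fixes F :: "('k::field,'n::finite) dbl \<Rightarrow> _ \<Rightarrow> _" and T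
  assumes LYF: "LY dsc F T"
    and hf: "\<And>x y. inA (f x y) = F (inA x) (inA y)"
    and ht: "\<And>x y z. inA (t x y z) = T (inA x) (inA y) (inA z)"
  shows "LY (*s) f t"
proof -
  note c = LYF[unfolded LY_def]
  note bF = c[THEN conjunct1] and tT = c[THEN conjunct2, THEN conjunct1]
    and sF = c[THEN conjunct2, THEN conjunct2, THEN conjunct1, rule_format]
    and sT = c[THEN conjunct2, THEN conjunct2, THEN conjunct2, THEN conjunct1, rule_format]
    and L1 = c[THEN conjunct2, THEN conjunct2, THEN conjunct2, THEN conjunct2, THEN conjunct1, rule_format]
    and L2 = c[THEN conjunct2, THEN conjunct2, THEN conjunct2, THEN conjunct2, THEN conjunct2, THEN conjunct1, rule_format]
    and L3 = c[THEN conjunct2, THEN conjunct2, THEN conjunct2, THEN conjunct2, THEN conjunct2, THEN conjunct2, THEN conjunct1, rule_format]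
    and L4 = c[THEN conjunct2, THEN conjunct2, THEN conjunct2, THEN conjunct2, THEN conjunct2, THEN conjunct2, THEN conjunct2, rule_format]
  note bp = bil_props[OF bF] and tp = tril_props[OF tT]
  show ?thesis unfolding LY_def bilinear_op_def trilinear_op_def
  proof (intro conjI allI)
    fix x y z w v c
    show "f (x + y) z = f x z + f y z" by (rule inA_injI) (simp add: inA_push hf bp)
    show "f x (y + z) = f x y + f x z" by (rule inA_injI) (simp add: inA_push hf bp)
    show "f (c *s x) y = c *s f x y" by (rule inA_injI) (simp add: inA_push hf bp)
    show "f x (c *s y) = c *s f x y" by (rule inA_injI) (simp add: inA_push hf bp)
    show "t (x + y) z w = t x z w + t y z w" by (rule inA_injI) (simp add: inA_push ht tp)
    show "t x (y + z) w = t x y w + t x z w" by (rule inA_injI) (simp add: inA_push ht tp)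
    show "t x y (z + w) = t x y z + t x y w" by (rule inA_injI) (simp add: inA_push ht tp)
    show "t (c *s x) y z = c *s t x y z" by (rule inA_injI) (simp add: inA_push ht tp)
    show "t x (c *s y) z = c *s t x y z" by (rule inA_injI) (simp add: inA_push ht tp)
    show "t x y (c *s z) = c *s t x y z" by (rule inA_injI) (simp add: inA_push ht tp)
    show "f x y = - f y x" by (rule inA_injI) (simp only: inA_push hf, rule sF)
    show "t x y z = - t y x z" by (rule inA_injI) (simp only: inA_push ht, rule sT)
    show "f (f x y) z + f (f y z) x + f (f z x) y + t x y z + t y z x + t z x y = 0"
      by (rule inA_injI) (simp only: inA_push hf ht, rule L1)
    show "t (f x y) z w + t (f y z) x w + t (f z x) y w = 0"
      by (rule inA_injI) (simp only: inA_push hf ht, rule L2)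
    show "t x y (f z w) = f (t x y z) w + f z (t x y w)"
      by (rule inA_injI) (simp only: inA_push hf ht, rule L3)
    show "t x y (t z w v) = t (t x y z) w v + t z (t x y w) v + t z w (t x y v)"
      by (rule inA_injI) (simp only: inA_push hf ht, rule L4)
  qed
qed


lemma isA_I: "(\<And>y. omega_p X (inA y) = 0) \<Longrightarrow> isA X"
proof -
  assume h: "\<And>y. omega_p X (inA y) = 0"
  have "snd X $ i = 0" for i using h[of "axis i 1"] by (simp add: omega_p_def inA_def dpair_axisR)
  then show ?thesis by (simp add: isA_def vec_eq_iff)
qed
lemma isD_I: "(\<And>b. omega_p X (inD b) = 0) \<Longrightarrow> isD X"
proof -
  assume h: "\<And>b. omega_p X (inD b) = 0"
  have "fst X $ i = 0" for i using h[of "axis i 1"] by (simp add: omega_p_def inD_def dpair_axisL)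
  then show ?thesis by (simp add: isD_def vec_eq_iff)
qed
lemma isAA: "isA X \<Longrightarrow> isA Y \<Longrightarrow> omega_p X Y = 0" by (simp add: isA_def omega_p_def)
lemma isDD: "isD X \<Longrightarrow> isD Y \<Longrightarrow> omega_p X Y = 0" by (simp add: isD_def omega_p_def)
lemma isA_inA: "isA (inA x)" by (simp add: isA_def inA_def)
lemma isD_inD: "isD (inD x)" by (simp add: isD_def inD_def)

lemma mulA: "isA (m (inA x) (inA y)) \<Longrightarrow> inA (restrA2 m x y) = m (inA x) (inA y)"
  by (simp add: isA_def inA_def restrA2_def prod_eq_iff)
lemma triA: "isA (t (inA x) (inA y) (inA z)) \<Longrightarrow> inA (restrA3 t x y z) = t (inA x) (inA y) (inA z)"
  by (simp add: isA_def inA_def restrA3_def prod_eq_iff)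

definition restrD2 :: "(('k::field, 'n::finite) dbl \<Rightarrow> ('k, 'n) dbl \<Rightarrow> ('k, 'n) dbl) \<Rightarrow> 'k ^ 'n \<Rightarrow> 'k ^ 'n \<Rightarrow> 'k ^ 'n" where
  "restrD2 f x y = snd (f (inD x) (inD y))"
definition restrD3 :: "(('k::field, 'n::finite) dbl \<Rightarrow> ('k, 'n) dbl \<Rightarrow> ('k, 'n) dbl \<Rightarrow> ('k, 'n) dbl) \<Rightarrow>
    'k ^ 'n \<Rightarrow> 'k ^ 'n \<Rightarrow> 'k ^ 'n \<Rightarrow> 'k ^ 'n" where
  "restrD3 f x y z = snd (f (inD x) (inD y) (inD z))"
lemma mulD: "isD (m (inD x) (inD y)) \<Longrightarrow> m (inD x) (inD y) = inD (restrD2 m x y)"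
  by (simp add: isD_def inD_def restrD2_def prod_eq_iff)
lemma triDD: "isD (t (inD x) (inD y) (inD z)) \<Longrightarrow> t (inD x) (inD y) (inD z) = inD (restrD3 t x y z)"
  by (simp add: isD_def inD_def restrD3_def prod_eq_iff)

lemma partA:
  fixes mul :: "('k::field_char_0,'n::finite) dbl \<Rightarrow> _ \<Rightarrow> _" and tri
  assumes MT: "manin_triple mul tri"
  shows "LY dsc (commC mul) (triC mul tri) \<and> symplectic dsc omega_p (commC mul) (triC mul tri) \<and>
        phase_space (commC (restrA2 mul)) (triC (restrA2 mul) (restrA3 tri)) (commC mul) (triC mul tri)"
    and "perfect (triC mul tri)" and "ind_mul (commC mul) = mul" and "ind_tri (triC mul tri) = tri"
proof -
  note MTc = MT[unfolded manin_triple_def]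
  have Q: "quadratic_preLY dsc mul tri omega_p" using MTc by blast
  have AA: "\<And>x y. isA (mul (inA x) (inA y))" "\<And>x y z. isA (tri (inA x) (inA y) (inA z))"
    and DD: "\<And>a b. isD (mul (inD a) (inD b))" "\<And>a b c. isD (tri (inD a) (inD b) (inD c))"
    and mixA: "\<And>x a b. isA (tri (inD a) (inD b) (inA x))" "\<And>x a b. isA (tri (inA x) (inD a) (inD b))"
    and mixD: "\<And>x y a. isD (tri (inA x) (inA y) (inD a))" "\<And>x y a. isD (tri (inD a) (inA x) (inA y))"
    using MTc by blast+
  note Qc = Q[unfolded quadratic_preLY_def]
  note PL = Qc[THEN conjunct1, unfolded preLY_def]
  note R1q = Qc[THEN conjunct2, THEN conjunct2, THEN conjunct1, rule_format]
    and R2q = Qc[THEN conjunct2, THEN conjunct2, THEN conjunct2, rule_format]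
  note bm = PL[THEN conjunct1] and tt = PL[THEN conjunct2, THEN conjunct1]
    and P1 = PL[THEN conjunct2, THEN conjunct2, THEN conjunct1, rule_format]
    and P2 = PL[THEN conjunct2, THEN conjunct2, THEN conjunct2, THEN conjunct1, rule_format]
    and P4 = PL[THEN conjunct2, THEN conjunct2, THEN conjunct2, THEN conjunct2, THEN conjunct2, THEN conjunct1, rule_format]
  note lC = lin_C[OF bm tt]
  interpret s0 omega_p mul tri
    apply unfold_locales
    apply (rule opL) apply (rule op_skew) apply (erule op_nd)
    apply (simp_all add: bil_props[OF bm] tril_props[OF tt])
    done
  interpret sb2 omega_p mul tri "commC mul" "triC mul tri"
    apply unfold_locales
    apply (rule bil_props(1)[OF lC(1)])
    apply (simp add: commC_def)
    apply (rule tril_props(1)[OF lC(2)])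
    apply (rule tril_props(3)[OF lC(2)])
    apply (rule triC_skew)
    apply (rule R1q)
    apply (rule R2q)
    apply (simp add: commC_def)
    apply (rule LY1_C)
    apply (rule refl)
    done
  have LYC: "LY dsc (commC mul) (triC mul tri)"
    unfolding LY_def
    using lC br_skew triC_skew LY1_C LY_of_P[OF P1 P2 P4] by blast
  have SY: "symplectic dsc omega_p (commC mul) (triC mul tri)"
    unfolding symplectic_def
  proof (intro conjI allI)
    show "nondeg_skew_form dsc omega_p" by (rule omega_p_nd)
    fix x y z w :: "('k,'n) dbl"
    show "omega_p x (commC mul y z) + omega_p y (commC mul z x) + omega_p z (commC mul x y) = 0"
    proof -
      have "(3::'k) \<noteq> 0" by simp
      then show ?thesis using cyc3[of x y z] mult_eq_0_iff by blast
    qed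
    show "omega_p z (triC mul tri x y w) - omega_p x (triC mul tri w z y) + omega_p y (triC mul tri w z x)
        - omega_p w (triC mul tri x y z) = 0" by (rule ST)
  qed
  have hf: "inA (commC (restrA2 mul) x y) = commC mul (inA x) (inA y)" for x y
    by (simp add: commC_def inA_diff mulA[of mul, OF AA(1)])
  have ht: "inA (triC (restrA2 mul) (restrA3 tri) x y z) = triC mul tri (inA x) (inA y) (inA z)" for x y z
    by (simp only: triC_def triD_def assoc3_def inA_push mulA[of mul, OF AA(1)] triA[of tri, OF AA(2)])
  show "LY dsc (commC mul) (triC mul tri) \<and> symplectic dsc omega_p (commC mul) (triC mul tri) \<and>
        phase_space (commC (restrA2 mul)) (triC (restrA2 mul) (restrA3 tri)) (commC mul) (triC mul tri)"
    unfolding phase_space_def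
  proof (intro conjI allI)
    show "LY (*s) (commC (restrA2 mul)) (triC (restrA2 mul) (restrA3 tri))"
      by (rule LY_transfer[OF LYC hf ht])
    fix x y z a b c
    show "commC mul (inA x) (inA y) = inA (commC (restrA2 mul) x y)" by (rule hf[symmetric])
    show "triC mul tri (inA x) (inA y) (inA z) = inA (triC (restrA2 mul) (restrA3 tri) x y z)" by (rule ht[symmetric])
    show "isD (commC mul (inD a) (inD b))"
      by (simp only: commC_def mulD[of mul, OF DD(1)]) (simp add: isD_def inD_def)
    show "isD (triC mul tri (inD a) (inD b) (inD c))"
      by (simp only: triC_def triD_def assoc3_def mulD[of mul, OF DD(1)] triDD[of tri, OF DD(2)]) (simp add: isD_def inD_def)
  qed (fact LYC SY)+
  show "perfect (triC mul tri)"
    unfolding perfect_def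
  proof (intro allI conjI)
    fix x y a b
    show "isA (triC mul tri (inD a) (inD b) (inA x))"
    proof (rule isA_I)
      fix u show "omega_p (triC mul tri (inD a) (inD b) (inA x)) (inA u) = 0"
        using R2q[of "inA u" "inA x" "inD b" "inD a"] op_skew[of "triC mul tri (inD a) (inD b) (inA x)" "inA u"]
          isDD[OF mixD(1) isD_inD] by simp
    qed
    show "isA (triC mul tri (inA x) (inD a) (inD b))"
    proof (rule isA_I)
      fix u show "omega_p (triC mul tri (inA x) (inD a) (inD b)) (inA u) = 0"
        using R2q[of "inA u" "inD b" "inD a" "inA x"] op_skew[of "triC mul tri (inA x) (inD a) (inD b)" "inA u"]
          isAA[OF mixA(2) isA_inA] by simp
    qed
    show "isD (triC mul tri (inA x) (inA y) (inD a))"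
    proof (rule isD_I)
      fix u show "omega_p (triC mul tri (inA x) (inA y) (inD a)) (inD u) = 0"
        using R2q[of "inD u" "inD a" "inA y" "inA x"] op_skew[of "triC mul tri (inA x) (inA y) (inD a)" "inD u"]
          isAA[OF mixA(1) isA_inA] by simp
    qed
    show "isD (triC mul tri (inD a) (inA x) (inA y))"
    proof (rule isD_I)
      fix u show "omega_p (triC mul tri (inD a) (inA x) (inA y)) (inD u) = 0"
        using R2q[of "inD u" "inA y" "inA x" "inD a"] op_skew[of "triC mul tri (inD a) (inA x) (inA y)" "inD u"]
          isDD[OF mixD(2) isD_inD] by simp
    qed
  qed
  show "ind_mul (commC mul) = mul"
  proof (intro ext)
    fix X Y show "ind_mul (commC mul) X Y = mul X Y"
      unfolding ind_mul_def
    proof (rule the_equality)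
      show "\<forall>Z. omega_p (mul X Y) Z = - omega_p Y (commC mul X Z)" using R1q by blast
      fix P assume h: "\<forall>Z. omega_p P Z = - omega_p Y (commC mul X Z)"
      show "P = mul X Y"
      proof (rule om_eqI)
        fix Z show "omega_p P Z = omega_p (mul X Y) Z" using h R1q[of X Y Z] by metis
      qed
    qed
  qed
  show "ind_tri (triC mul tri) = tri"
  proof (intro ext)
    fix X Y Z show "ind_tri (triC mul tri) X Y Z = tri X Y Z"
      unfolding ind_tri_def
    proof (rule the_equality)
      show "\<forall>W. omega_p (tri X Y Z) W = omega_p X (triC mul tri W Z Y)" using R2q by blast
      fix P assume h: "\<forall>W. omega_p P W = omega_p X (triC mul tri W Z Y)"
      show "P = tri X Y Z"
      proof (rule om_eqI)
        fix W show "omega_p P W = omega_p (tri X Y Z) W" using h R2q[of X Y Z W] by metis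
      qed
    qed
  qed
qed


lemma opR: "omega_p Z (X + Y) = omega_p Z X + omega_p Z Y"
  using omega_p_bil unfolding bilinear_form_def by blast
lemma op0R: "omega_p X 0 = 0" by (simp add: omega_p_def)
lemma opNR: "omega_p X (- Y) = - omega_p X Y"
  using opR[of X Y "-Y"] by (simp add: op0R add_eq_0_iff)
lemma op_eqI: "(\<And>W. omega_p X W = omega_p X' W) \<Longrightarrow> X = X'"
proof -
  assume h: "\<And>W. omega_p X W = omega_p X' W"
  have "omega_p (X - X') W = 0" for W
    using opL[of "X - X'" X' W] h[of W] by simp
  then have "X - X' = 0" by (rule op_nd)
  then show ?thesis by simp
qed

lemma partB:
  fixes br :: "('k::field_char_0,'n::finite) dbl \<Rightarrow> _ \<Rightarrow> _" and tr brh trh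
  assumes PS: "phase_space brh trh br tr"
  shows "commC (ind_mul br) = br" "triC (ind_mul br) (ind_tri tr) = tr"
    and "perfect tr \<Longrightarrow> manin_triple (ind_mul br) (ind_tri tr)"
proof -
  note PSc = PS[unfolded phase_space_def]
  note LYc = PSc[THEN conjunct2, THEN conjunct1, unfolded LY_def]
  note SYc = PSc[THEN conjunct2, THEN conjunct2, THEN conjunct1, unfolded symplectic_def]
  have brA: "\<And>x y. br (inA x) (inA y) = inA (brh x y)"
    and trA: "\<And>x y z. tr (inA x) (inA y) (inA z) = inA (trh x y z)"
    and brD: "\<And>a b. isD (br (inD a) (inD b))" and trD: "\<And>a b c. isD (tr (inD a) (inD b) (inD c))"
    using PSc by blast+
  note bB = LYc[THEN conjunct1] and tT = LYc[THEN conjunct2, THEN conjunct1]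
    and sB = LYc[THEN conjunct2, THEN conjunct2, THEN conjunct1, rule_format]
    and sT = LYc[THEN conjunct2, THEN conjunct2, THEN conjunct2, THEN conjunct1, rule_format]
    and L1 = LYc[THEN conjunct2, THEN conjunct2, THEN conjunct2, THEN conjunct2, THEN conjunct1, rule_format]
    and L2 = LYc[THEN conjunct2, THEN conjunct2, THEN conjunct2, THEN conjunct2, THEN conjunct2, THEN conjunct1, rule_format]
    and L3 = LYc[THEN conjunct2, THEN conjunct2, THEN conjunct2, THEN conjunct2, THEN conjunct2, THEN conjunct2, THEN conjunct1, rule_format]
    and L4 = LYc[THEN conjunct2, THEN conjunct2, THEN conjunct2, THEN conjunct2, THEN conjunct2, THEN conjunct2, THEN conjunct2, rule_format]
  note cyc = SYc[THEN conjunct2, THEN conjunct1, rule_format]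
    and STs = SYc[THEN conjunct2, THEN conjunct2, rule_format]
  note bp = bil_props[OF bB] and tp = tril_props[OF tT]
  define mul where "mul = ind_mul br"
  define tri where "tri = ind_tri tr"
  have R1: "omega_p (mul X Y) Z = - omega_p Y (br X Z)" for X Y Z
  proof -
    have "\<exists>P. \<forall>Z. omega_p P Z = - omega_p Y (br X Z)"
      by (rule omega_p_repr) (simp_all add: bp opR opSR)
    then have "\<exists>!P. \<forall>Z. omega_p P Z = - omega_p Y (br X Z)"
      by (metis op_eqI)
    from theI'[OF this] show ?thesis unfolding mul_def ind_mul_def by blast
  qed
  have R2: "omega_p (tri X Y Z) W = omega_p X (tr W Z Y)" for X Y Z W
  proof -
    have "\<exists>P. \<forall>W. omega_p P W = omega_p X (tr W Z Y)"
      by (rule omega_p_repr) (simp_all add: tp opR opSR)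
    then have "\<exists>!P. \<forall>W. omega_p P W = omega_p X (tr W Z Y)"
      by (metis op_eqI)
    from theI'[OF this] show ?thesis unfolding tri_def ind_tri_def by blast
  qed
  have bm: "bilinear_op dsc mul"
    unfolding bilinear_op_def
    by (intro conjI allI; rule op_eqI; simp add: R1 opL opS bp opR opSR)
  have tt: "trilinear_op dsc tri"
    unfolding trilinear_op_def
    by (intro conjI allI; rule op_eqI; simp add: R2 opL opS tp opR opSR)
  interpret s0 omega_p mul tri
    apply unfold_locales
    apply (rule opL) apply (rule op_skew) apply (erule op_nd)
    apply (simp_all add: bil_props[OF bm] tril_props[OF tt])
    done
  have R3: "br x y = mul x y - mul y x" for x y
  proof (rule om_eqI[symmetric])
    fix W
    have "omega_p (mul x y - mul y x) W = - omega_p y (br x W) + omega_p x (br y W)"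
      by (simp add: omlin R1)
    also have "\<dots> = omega_p (br x y) W"
    proof -
      have "omega_p y (br W x) = - omega_p y (br x W)" using sB[of W x] opNR[of y "br x W"] by simp
      then show ?thesis using cyc[of x y W] om_skew[of "br x y" W] by algebra
    qed
    finally show "omega_p (mul x y - mul y x) W = omega_p (br x y) W" .
  qed
  interpret sb omega_p mul tri br tr
    apply unfold_locales
    apply (rule bp(1)) apply (rule sB) apply (rule tp(1)) apply (rule tp(3)) apply (rule sT)
    apply (rule R1) apply (rule R2) apply (rule R3) apply (rule L1)
    done
  have R4: "triC mul tri x y z = tr x y z" for x y z
    by (rule R4_from_ST) (rule STs)
  interpret sb2 omega_p mul tri br tr
    by unfold_locales (rule R4)
  show "commC (ind_mul br) = br"
    by (intro ext) (simp add: mul_def[symmetric] commC_br)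
  show "triC (ind_mul br) (ind_tri tr) = tr"
    by (intro ext) (simp add: mul_def[symmetric] tri_def[symmetric] R4)
  assume pf: "perfect tr"
  note pfc = pf[unfolded perfect_def, rule_format]
  show "manin_triple (ind_mul br) (ind_tri tr)"
    unfolding mul_def[symmetric] tri_def[symmetric] manin_triple_def
  proof (intro conjI allI)
    show "quadratic_preLY dsc mul tri omega_p"
      unfolding quadratic_preLY_def preLY_def
      using bm tt P_of_LY[OF L2 L3 L4] omega_p_nd R1 R2 commC_br R4 by simp
    fix x y z a b c :: "'k ^ 'n"
    show "omega_p (inA x) (inA y) = 0" by (rule isAA[OF isA_inA isA_inA])
    show "omega_p (inD a) (inD b) = 0" by (rule isDD[OF isD_inD isD_inD])
    show "isA (mul (inA x) (inA y))"
      by (rule isA_I) (simp add: R1 brA isAA[OF isA_inA isA_inA])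
    show "isA (tri (inA x) (inA y) (inA z))"
      by (rule isA_I) (simp add: R2 trA isAA[OF isA_inA isA_inA])
    show "isD (mul (inD a) (inD b))"
      by (rule isD_I) (simp add: R1 isDD[OF isD_inD brD])
    show "isD (tri (inD a) (inD b) (inD c))"
      by (rule isD_I) (simp add: R2 isDD[OF isD_inD trD])
    show "isA (tri (inD a) (inD b) (inA x))"
      by (rule isA_I) (simp add: R2 isDD[OF isD_inD pfc[THEN conjunct2, THEN conjunct2, THEN conjunct1]])
    show "isA (tri (inA x) (inD a) (inD b))"
      by (rule isA_I) (simp add: R2 isAA[OF isA_inA pfc[THEN conjunct2, THEN conjunct1]])
    show "isA (tri (inD a) (inA x) (inD b))"
    proof (rule isA_I)
      fix u
      have "tr (inA u) (inD b) (inA x) = - tr (inD b) (inA u) (inA x)" by (rule sT)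
      then show "omega_p (tri (inD a) (inA x) (inD b)) (inA u) = 0"
        by (simp add: R2 opNR isDD[OF isD_inD pfc[THEN conjunct2, THEN conjunct2, THEN conjunct2]])
    qed
    show "isD (tri (inA x) (inA y) (inD a))"
      by (rule isD_I) (simp add: R2 isAA[OF isA_inA pfc[THEN conjunct1]])
    show "isD (tri (inD a) (inA x) (inA y))"
      by (rule isD_I) (simp add: R2 isDD[OF isD_inD pfc[THEN conjunct2, THEN conjunct2, THEN conjunct2]])
    show "isD (tri (inA x) (inD a) (inA y))"
    proof (rule isD_I)
      fix u
      have "tr (inD u) (inA y) (inD a) = - tr (inA y) (inD u) (inD a)" by (rule sT)
      then show "omega_p (tri (inA x) (inD a) (inA y)) (inD u) = 0"
        by (simp add: R2 opNR isAA[OF isA_inA pfc[THEN conjunct2, THEN conjunct1]])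
    qed
  qed
qed


theorem theorem4p13:
  fixes mul :: "('k::field_char_0, 'n::finite) dbl \<Rightarrow> ('k, 'n) dbl \<Rightarrow> ('k, 'n) dbl"
    and tri :: "('k, 'n) dbl \<Rightarrow> ('k, 'n) dbl \<Rightarrow> ('k, 'n) dbl \<Rightarrow> ('k, 'n) dbl"
    and brh :: "'k ^ 'n \<Rightarrow> 'k ^ 'n \<Rightarrow> 'k ^ 'n"
    and trh :: "'k ^ 'n \<Rightarrow> 'k ^ 'n \<Rightarrow> 'k ^ 'n \<Rightarrow> 'k ^ 'n"
    and br :: "('k, 'n) dbl \<Rightarrow> ('k, 'n) dbl \<Rightarrow> ('k, 'n) dbl"
    and tr :: "('k, 'n) dbl \<Rightarrow> ('k, 'n) dbl \<Rightarrow> ('k, 'n) dbl \<Rightarrow> ('k, 'n) dbl"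
  shows
    \<comment> \<open>(a)\<close>
    "(manin_triple mul tri \<longrightarrow>
        LY dsc (commC mul) (triC mul tri) \<and> symplectic dsc omega_p (commC mul) (triC mul tri) \<and>
        phase_space (commC (restrA2 mul)) (triC (restrA2 mul) (restrA3 tri))
                    (commC mul) (triC mul tri))
   \<and> \<comment> \<open>(b)\<close>
     (phase_space brh trh br tr \<and> perfect tr \<longrightarrow>
        manin_triple (ind_mul br) (ind_tri tr))
   \<and> \<comment> \<open>one-to-one correspondence: the two constructions are mutually inverse\<close>
     (manin_triple mul tri \<longrightarrow>
        perfect (triC mul tri) \<and>
        ind_mul (commC mul) = mul \<and> ind_tri (triC mul tri) = tri)
   \<and> (phase_space brh trh br tr \<and> perfect tr \<longrightarrow>
        commC (ind_mul br) = br \<and> triC (ind_mul br) (ind_tri tr) = tr)"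
  using partA[of mul tri] partB[of brh trh br tr] by blast

end
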